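(* Let $\mathbf{X}$ be a finitely supported real random variable with $\mathbf{E}[\mathbf{X}]=0$ and $\mathrm{Var}[\mathbf{X}]=1$ that takes at most $\ell$ distinct values, and let $d\ge 1$ and $s\ge 1$ be natural numbers. Then there do not exist (for any $n$) two multilinear polynomials $p,q$ of degree at most $d$ over $\mathbb{R}^n$ with $\mathrm{sparsity}(p)=s$ and $\mathrm{sparsity}(q)>\Phi(d,s,\ell)$ such that $p(\mathbf{X}^{\otimes n})$ and $q(\mathbf{X}^{\otimes n})$ are identically distributed. Consequently $\mathrm{Max\text{-}Sparsity\text{-}Gap}_{\mathbf{X},d}(s)$ is well defined and \[ \mathrm{Max\text{-}Sparsity\text{-}Gap}_{\mathbf{X},d}(s)\le \Phi(d,s,\ell):=2^{2d^2\cdot(\ell^{ds}+3)}. \]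
   Context: A multilinear polynomial of degree at most $d$ over $\mathbb{R}^n$ is $p(x)=\sum_{S\subseteq[n],|S|\le d}\widehat{p}(S)\prod_{i\in S}x_i$; $\mathrm{sparsity}(p)$ is the number of nonzero coefficients. $\mathrm{Max\text{-}Sparsity\text{-}Gap}_{\mathbf{X},d}(s)$ is the largest natural number $t$ such that there exist (for some $n$) multilinear polynomials $p,q$ of degree at most $d$ with $\mathrm{sparsity}(p)=s$, $\mathrm{sparsity}(q)=t$, and $p(\mathbf{X}^{\otimes n})$, $q(\mathbf{X}^{\otimes n})$ identically distributed (where $\mathbf{X}^{\otimes n}$ is a vector of $n$ i.i.d. copies of $\mathbf{X}$), while no such pair exists with $\mathrm{sparsity}(q)>t$. *)

theory Defs
  imports "HOL-Probability.Probability"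
begin

text \<open>A multilinear polynomial over R^n (variables indexed 0..n-1) is represented by its
  coefficient function c :: nat set => real (c S is the coefficient of the monomial prod_{i in S} x_i).\<close>

definition is_mlpoly :: "nat \<Rightarrow> nat \<Rightarrow> (nat set \<Rightarrow> real) \<Rightarrow> bool" where
  "is_mlpoly n d c \<longleftrightarrow> (\<forall>S. c S \<noteq> 0 \<longrightarrow> S \<subseteq> {..<n} \<and> card S \<le> d)"

definition sparsity :: "(nat set \<Rightarrow> real) \<Rightarrow> nat" where
  "sparsity c = card {S. c S \<noteq> 0}"

definition mlpoly_eval :: "nat \<Rightarrow> (nat set \<Rightarrow> real) \<Rightarrow> (nat \<Rightarrow> real) \<Rightarrow> real" where
  "mlpoly_eval n c x = (\<Sum>S\<in>Pow {..<n}. c S * (\<Prod>i\<in>S. x i))"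

definition poly_distr :: "real pmf \<Rightarrow> nat \<Rightarrow> (nat set \<Rightarrow> real) \<Rightarrow> real pmf" where
  "poly_distr X n c = map_pmf (mlpoly_eval n c) (Pi_pmf {..<n} 0 (\<lambda>_. X))"

definition gap_pair :: "real pmf \<Rightarrow> nat \<Rightarrow> nat \<Rightarrow> nat \<Rightarrow> bool" where
  "gap_pair X d s t \<longleftrightarrow> (\<exists>n p q. is_mlpoly n d p \<and> is_mlpoly n d q \<and>
      sparsity p = s \<and> sparsity q = t \<and> poly_distr X n p = poly_distr X n q)"

definition Max_Sparsity_Gap :: "real pmf \<Rightarrow> nat \<Rightarrow> nat \<Rightarrow> nat" where
  "Max_Sparsity_Gap X d s = Max {t. gap_pair X d s t}"

definition Phi :: "nat \<Rightarrow> nat \<Rightarrow> nat \<Rightarrow> nat" where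
  "Phi d s l = 2 ^ (2 * d^2 * (l ^ (d * s) + 3))"

end

theory Submission
  imports Defs
begin


definition vars :: "(nat set \<Rightarrow> real) \<Rightarrow> nat set" where
  "vars c = {i. \<exists>S. c S \<noteq> 0 \<and> i \<in> S}"
definition Dv :: "nat \<Rightarrow> (nat set \<Rightarrow> real) \<Rightarrow> (nat set \<Rightarrow> real)" where
  "Dv v c = (\<lambda>S. if v \<in> S then 0 else c (insert v S))"
definition Rv :: "nat \<Rightarrow> (nat set \<Rightarrow> real) \<Rightarrow> (nat set \<Rightarrow> real)" where
  "Rv v c = (\<lambda>S. if v \<in> S then 0 else c S)"
definition supp_in :: "nat \<Rightarrow> (nat set \<Rightarrow> real) \<Rightarrow> bool" where
  "supp_in n c \<longleftrightarrow> (\<forall>S. c S \<noteq> 0 \<longrightarrow> S \<subseteq> {..<n})"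
definition degle :: "nat \<Rightarrow> (nat set \<Rightarrow> real) \<Rightarrow> bool" where
  "degle d c \<longleftrightarrow> (\<forall>S. c S \<noteq> 0 \<longrightarrow> card S \<le> d)"

lemma sum_Pow_split:
  assumes "finite N" "v \<in> N"
  shows "(\<Sum>S\<in>Pow N. f S) = (\<Sum>S\<in>Pow (N - {v}). f S + f (insert v S))"
proof -
  have N: "N = insert v (N - {v})" using assms by auto
  have "(\<Sum>S\<in>Pow N. f S) = (\<Sum>S\<in>Pow (N - {v}) \<union> insert v ` Pow (N - {v}). f S)"
    by (subst N, subst Pow_insert) simp
  also have "\<dots> = (\<Sum>S\<in>Pow (N - {v}). f S) + (\<Sum>S\<in>insert v ` Pow (N - {v}). f S)"
    by (rule sum.union_disjoint) (use assms in auto)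
  also have "(\<Sum>S\<in>insert v ` Pow (N - {v}). f S) = (\<Sum>S\<in>Pow (N - {v}). f (insert v S))"
    by (rule sum.reindex_cong[where l="insert v"]) (auto simp: inj_on_def)
  finally show ?thesis by (simp add: sum.distrib)
qed

lemma supp_in_Dv: "supp_in n c \<Longrightarrow> supp_in n (Dv v c)"
  unfolding supp_in_def Dv_def by auto
lemma supp_in_Rv: "supp_in n c \<Longrightarrow> supp_in n (Rv v c)"
  unfolding supp_in_def Rv_def by auto
lemma vars_Dv: "vars (Dv v c) = {j. j \<noteq> v \<and> (\<exists>S. c S \<noteq> 0 \<and> v \<in> S \<and> j \<in> S)}"
proof (intro equalityI subsetI)
  fix j assume "j \<in> vars (Dv v c)"
  then obtain S where "Dv v c S \<noteq> 0" "j \<in> S" unfolding vars_def by auto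
  then have "v \<notin> S" "c (insert v S) \<noteq> 0" unfolding Dv_def by (auto split: if_splits)
  then show "j \<in> {j. j \<noteq> v \<and> (\<exists>S. c S \<noteq> 0 \<and> v \<in> S \<and> j \<in> S)}"
    using \<open>j \<in> S\<close> by auto
next
  fix j assume "j \<in> {j. j \<noteq> v \<and> (\<exists>S. c S \<noteq> 0 \<and> v \<in> S \<and> j \<in> S)}"
  then obtain S where S: "j \<noteq> v" "c S \<noteq> 0" "v \<in> S" "j \<in> S" by auto
  then have "insert v (S - {v}) = S" by auto
  then have "Dv v c (S - {v}) \<noteq> 0" using S unfolding Dv_def by auto
  then show "j \<in> vars (Dv v c)" unfolding vars_def using S by auto
qed
lemma vars_Rv: "vars (Rv v c) \<subseteq> vars c - {v}"
  unfolding vars_def Rv_def by auto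
lemma vars_Dv_sub: "vars (Dv v c) \<subseteq> vars c - {v}"
  unfolding vars_Dv by (auto simp: vars_def)
lemma vars_sub: "supp_in n c \<Longrightarrow> vars c \<subseteq> {..<n}"
  unfolding supp_in_def vars_def by auto

lemma eval_split:
  assumes "supp_in n c" "v < n"
  shows "mlpoly_eval n c x = x v * mlpoly_eval n (Dv v c) x + mlpoly_eval n (Rv v c) x"
proof -
  let ?N = "{..<n}"
  have fin: "\<And>S. S \<in> Pow (?N - {v}) \<Longrightarrow> finite S \<and> v \<notin> S"
    by (auto intro: finite_subset)
  have "mlpoly_eval n c x = (\<Sum>S\<in>Pow (?N - {v}). c S * (\<Prod>i\<in>S. x i) + c (insert v S) * (\<Prod>i\<in>insert v S. x i))"
    unfolding mlpoly_eval_def using assms by (intro sum_Pow_split) auto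
  also have "\<dots> = (\<Sum>S\<in>Pow (?N - {v}). x v * (c (insert v S) * (\<Prod>i\<in>S. x i)) + c S * (\<Prod>i\<in>S. x i))"
    by (intro sum.cong refl) (auto simp: fin prod.insert)
  also have "\<dots> = x v * (\<Sum>S\<in>Pow (?N - {v}). c (insert v S) * (\<Prod>i\<in>S. x i)) + (\<Sum>S\<in>Pow (?N - {v}). c S * (\<Prod>i\<in>S. x i))"
    by (simp add: sum.distrib sum_distrib_left)
  also have "(\<Sum>S\<in>Pow (?N - {v}). c (insert v S) * (\<Prod>i\<in>S. x i)) = mlpoly_eval n (Dv v c) x"
    unfolding mlpoly_eval_def using assms
    by (subst sum_Pow_split[of _ v]) (auto simp: Dv_def fin intro!: sum.cong)
  also have "(\<Sum>S\<in>Pow (?N - {v}). c S * (\<Prod>i\<in>S. x i)) = mlpoly_eval n (Rv v c) x"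
    unfolding mlpoly_eval_def using assms
    by (subst sum_Pow_split[of _ v]) (auto simp: Rv_def fin intro!: sum.cong)
  finally show ?thesis .
qed

lemma eval_dep:
  assumes "\<And>i. i \<in> vars c \<Longrightarrow> x i = y i"
  shows "mlpoly_eval n c x = mlpoly_eval n c y"
  unfolding mlpoly_eval_def
proof (intro sum.cong refl)
  fix S assume "S \<in> Pow {..<n}"
  show "c S * prod x S = c S * prod y S"
  proof (cases "c S = 0")
    case False
    then have "S \<subseteq> vars c" unfolding vars_def by auto
    then show ?thesis using assms by (auto intro!: prod.cong)
  qed simp
qed

lemma eval_novars:
  assumes "vars c = {}"
  shows "mlpoly_eval n c x = c {}"
proof -
  have z: "\<And>S. S \<noteq> {} \<Longrightarrow> c S = 0" using assms unfolding vars_def by auto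
  have "mlpoly_eval n c x = (\<Sum>S\<in>{{}}. c S * prod x S)"
    unfolding mlpoly_eval_def by (rule sum.mono_neutral_right) (auto simp: z)
  then show ?thesis by simp
qed

locale cube =
  fixes a b :: real and n :: nat
  assumes ab: "a \<noteq> b"
begin

definition pt :: "nat set \<Rightarrow> nat \<Rightarrow> real" where
  "pt T = (\<lambda>i. if i \<in> T then b else if i < n then a else 0)"
definition E :: "(nat set \<Rightarrow> real) \<Rightarrow> nat set \<Rightarrow> real" where
  "E c T = mlpoly_eval n c (pt T)"
definition rng :: "(nat set \<Rightarrow> real) \<Rightarrow> real set" where
  "rng c = E c ` Pow {..<n}"

lemma finite_rng: "finite (rng c)" unfolding rng_def by simp

lemma E_toggle:
  assumes "v \<notin> vars f"
  shows "E f (insert v T) = E f T" "E f (T - {v}) = E f T"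
  unfolding E_def using assms by (auto intro!: eval_dep simp: pt_def)

lemma E_diff:
  assumes "supp_in n c" "v < n"
  shows "E c (insert v T) - E c (T - {v}) = (b - a) * E (Dv v c) T"
proof -
  have nD: "v \<notin> vars (Dv v c)" and nR: "v \<notin> vars (Rv v c)"
    using vars_Dv_sub[of v c] vars_Rv[of v c] by auto
  have 1: "E c (insert v T) = b * E (Dv v c) T + E (Rv v c) T"
    using eval_split[OF assms, of "pt (insert v T)"] E_toggle[OF nD] E_toggle[OF nR]
    unfolding E_def by (simp add: pt_def)
  have 2: "E c (T - {v}) = a * E (Dv v c) T + E (Rv v c) T"
    using eval_split[OF assms, of "pt (T - {v})"] E_toggle[OF nD] E_toggle[OF nR] assms(2)
    unfolding E_def by (simp add: pt_def)
  show ?thesis using 1 2 by (simp add: algebra_simps)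
qed

lemma E_novars: "vars c = {} \<Longrightarrow> E c T = c {}"
  unfolding E_def by (rule eval_novars)

lemma Z_aux:
  assumes "finite W"
  shows "\<forall>c. supp_in n c \<longrightarrow> vars c \<subseteq> W \<longrightarrow> (\<forall>T\<subseteq>{..<n}. E c T = 0) \<longrightarrow> (\<forall>S. c S = 0)"
  using assms
proof (induction W rule: finite_induct)
  case empty
  show ?case
  proof (intro allI impI)
    fix c :: "nat set \<Rightarrow> real" and S
    assume "supp_in n c" "vars c \<subseteq> {}" and h: "\<forall>T\<subseteq>{..<n}. E c T = 0"
    then have v: "vars c = {}" by auto
    have "c {} = 0" using h E_novars[OF v, of "{}"] by auto
    moreover have "S \<noteq> {} \<Longrightarrow> c S = 0" using v unfolding vars_def by auto
    ultimately show "c S = 0" by blast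
  qed
next
  case (insert v W)
  show ?case
  proof (intro allI impI)
    fix c :: "nat set \<Rightarrow> real" and S
    assume sc: "supp_in n c" and vc: "vars c \<subseteq> insert v W" and h: "\<forall>T\<subseteq>{..<n}. E c T = 0"
    show "c S = 0"
    proof (cases "v < n")
      case False
      then have "vars c \<subseteq> W" using vc vars_sub[OF sc] by auto
      then show ?thesis using insert.IH sc h by blast
    next
      case True
      have hD: "\<forall>T\<subseteq>{..<n}. E (Dv v c) T = 0"
      proof (intro allI impI)
        fix T assume T: "T \<subseteq> {..<n}"
        have "T - {v} \<subseteq> {..<n}" using T by auto
        then have "(b - a) * E (Dv v c) T = 0"
          using E_diff[OF sc True, of T] h[rule_format, of "insert v T"] h[rule_format, of "T - {v}"] T True by auto
        then show "E (Dv v c) T = 0" using ab by simp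
      qed
      have hR: "\<forall>T\<subseteq>{..<n}. E (Rv v c) T = 0"
      proof (intro allI impI)
        fix T assume T: "T \<subseteq> {..<n}"
        have "E c T = pt T v * E (Dv v c) T + E (Rv v c) T"
          unfolding E_def by (rule eval_split[OF sc True])
        then show "E (Rv v c) T = 0" using h hD T by auto
      qed
      have "vars (Dv v c) \<subseteq> W" "vars (Rv v c) \<subseteq> W"
        using vars_Dv_sub[of v c] vars_Rv[of v c] vc by auto
      then have zD: "\<forall>S. Dv v c S = 0" and zR: "\<forall>S. Rv v c S = 0"
        using insert.IH supp_in_Dv[OF sc] supp_in_Rv[OF sc] hD hR by blast+
      show ?thesis
      proof (cases "v \<in> S")
        case True
        then have "insert v (S - {v}) = S" by auto
        then show ?thesis using zD[rule_format, of "S - {v}"] unfolding Dv_def by auto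
      next
        case False
        then show ?thesis using zR[rule_format, of S] unfolding Rv_def by auto
      qed
    qed
  qed
qed

lemma Z:
  assumes "supp_in n c" "\<And>T. T \<subseteq> {..<n} \<Longrightarrow> E c T = 0"
  shows "c S = 0"
  using Z_aux[of "{..<n}"] assms vars_sub[OF assms(1)] by blast

end



lemma chain_card:
  assumes "finite P" "\<forall>i\<in>P. 0 < (w i :: real)"
  shows "card P + 1 \<le> card ((\<lambda>U. sum w U) ` Pow P)"
  using assms
proof (induction P rule: finite_induct)
  case empty
  then show ?case by simp
next
  case (insert x P)
  let ?I = "(\<lambda>U. sum w U) ` Pow P"
  have IH: "card P + 1 \<le> card ?I" using insert by auto
  have notin: "sum w (insert x P) \<notin> ?I"
  proof
    assume "sum w (insert x P) \<in> ?I"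
    then obtain U where U: "U \<subseteq> P" "sum w U = sum w (insert x P)" by auto
    have "sum w U \<le> sum w P"
      using U insert by (intro sum_mono2) auto
    moreover have "sum w (insert x P) = w x + sum w P" using insert by simp
    moreover have "w x > 0" using insert by auto
    ultimately show False using U by simp
  qed
  have sub: "insert (sum w (insert x P)) ?I \<subseteq> (\<lambda>U. sum w U) ` Pow (insert x P)"
    by (auto simp: Pow_insert)
  have "card (insert (sum w (insert x P)) ?I) = card ?I + 1"
    using notin insert by simp
  moreover have "card (insert (sum w (insert x P)) ?I) \<le> card ((\<lambda>U. sum w U) ` Pow (insert x P))"
    by (rule card_mono) (use sub insert in auto)
  ultimately show ?case using IH insert by simp
qed

lemma averaging:
  assumes "finite I" "finite X" "X \<noteq> {}"
    and h: "\<forall>i\<in>I. card X \<le> K * card {x\<in>X. Q i x}"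
  shows "\<exists>x\<in>X. card I \<le> K * card {i\<in>I. Q i x}"
proof (rule ccontr)
  assume "\<not> ?thesis"
  then have lt: "\<forall>x\<in>X. K * card {i\<in>I. Q i x} < card I" by auto
  have cnt: "\<And>A P. finite A \<Longrightarrow> card {y\<in>A. P y} = (\<Sum>y\<in>A. if P y then 1 else (0::nat))"
    by (subst sum.inter_filter[symmetric]) simp_all
  have "(\<Sum>x\<in>X. K * card {i\<in>I. Q i x}) < (\<Sum>x\<in>X. card I)"
    using lt assms(2,3) by (intro sum_strict_mono) auto
  also have "\<dots> = card X * card I" by simp
  also have "\<dots> = (\<Sum>i\<in>I. card X)" by simp
  also have "\<dots> \<le> (\<Sum>i\<in>I. K * card {x\<in>X. Q i x})"
    using h by (intro sum_mono) auto
  also have "\<dots> = (\<Sum>i\<in>I. \<Sum>x\<in>X. K * (if Q i x then 1 else 0))"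
    using assms by (simp add: cnt sum_distrib_left)
  also have "\<dots> = (\<Sum>x\<in>X. \<Sum>i\<in>I. K * (if Q i x then 1 else 0))"
    by (rule sum.swap)
  also have "\<dots> = (\<Sum>x\<in>X. K * card {i\<in>I. Q i x})"
    using assms by (simp add: cnt sum_distrib_left)
  finally show False by simp
qed

lemma greedy:
  assumes "finite V"
    and "\<And>i. i\<in>V \<Longrightarrow> finite (nb i)"
    and "\<And>i. i\<in>V \<Longrightarrow> card (nb i) \<le> D"
    and "\<And>i. i\<in>V \<Longrightarrow> i \<notin> nb i"
    and "\<And>i j. i\<in>V \<Longrightarrow> j\<in>V \<Longrightarrow> j \<in> nb i \<Longrightarrow> i \<in> nb j"
  shows "\<exists>I\<subseteq>V. card V \<le> (D + 1) * card I \<and> (\<forall>i\<in>I. \<forall>j\<in>I. j \<notin> nb i)"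
  using assms
proof (induction "card V" arbitrary: V rule: less_induct)
  case less
  show ?case
  proof (cases "V = {}")
    case True
    then show ?thesis by auto
  next
    case False
    then obtain i where i: "i \<in> V" by auto
    define V' where "V' = V - insert i (nb i)"
    have sub: "V' \<subseteq> V" unfolding V'_def by blast
    have "card V' < card V" using i less.prems(1) unfolding V'_def by (intro psubset_card_mono) auto
    moreover have "finite V'" using sub less.prems(1) finite_subset by blast
    moreover have "\<And>i. i\<in>V' \<Longrightarrow> finite (nb i)" using sub less.prems(2) by blast
    moreover have "\<And>i. i\<in>V' \<Longrightarrow> card (nb i) \<le> D" using sub less.prems(3) by blast
    moreover have "\<And>i. i\<in>V' \<Longrightarrow> i \<notin> nb i" using sub less.prems(4) by blast
    moreover have "\<And>i j. i\<in>V' \<Longrightarrow> j\<in>V' \<Longrightarrow> j \<in> nb i \<Longrightarrow> i \<in> nb j"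
      using sub less.prems(5) by blast
    ultimately obtain I' where I': "I' \<subseteq> V'" "card V' \<le> (D + 1) * card I'"
      "\<forall>i\<in>I'. \<forall>j\<in>I'. j \<notin> nb i"
      using less.hyps[of V'] by blast
    have fin: "finite (nb i)" using less.prems(2) i by blast
    have "V \<subseteq> V' \<union> insert i (nb i)" unfolding V'_def by blast
    then have "card V \<le> card (V' \<union> insert i (nb i))"
      using less.prems(1) fin \<open>finite V'\<close> by (intro card_mono) auto
    also have "\<dots> \<le> card V' + card (insert i (nb i))" by (rule card_Un_le)
    also have "card (insert i (nb i)) \<le> D + 1"
      using less.prems(3)[OF i] fin by (simp add: card_insert_if)
    finally have cV: "card V \<le> card V' + (D + 1)" by simp
    have iI': "i \<notin> I'" using I'(1) unfolding V'_def by blast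
    have finI': "finite I'" using I'(1) \<open>finite V'\<close> finite_subset by blast
    have nbi: "\<And>x. x \<in> I' \<Longrightarrow> x \<notin> nb i" using I'(1) unfolding V'_def by blast
    have nbx: "\<And>x. x \<in> I' \<Longrightarrow> i \<notin> nb x"
      using nbi less.prems(5) i I'(1) sub by blast
    show ?thesis
    proof (intro exI[of _ "insert i I'"] conjI)
      show "insert i I' \<subseteq> V" using I'(1) i sub by blast
      show "card V \<le> (D + 1) * card (insert i I')"
        using cV I'(2) iI' finI' by simp
      show "\<forall>x\<in>insert i I'. \<forall>y\<in>insert i I'. y \<notin> nb x"
        using nbi nbx I'(3) less.prems(4)[OF i] by blast
    qed
  qed
qed



lemma degle_Dv:
  assumes "supp_in n c" "degle (Suc d) c"
  shows "degle d (Dv v c)"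
  unfolding degle_def
proof (intro allI impI)
  fix S assume "Dv v c S \<noteq> 0"
  then have h: "v \<notin> S" "c (insert v S) \<noteq> 0" unfolding Dv_def by (auto split: if_splits)
  then have "insert v S \<subseteq> {..<n}" "card (insert v S) \<le> Suc d"
    using assms unfolding supp_in_def degle_def by auto
  then have "finite S" using finite_subset by auto
  then show "card S \<le> d" using h \<open>card (insert v S) \<le> Suc d\<close> by simp
qed

lemma degle0:
  assumes "supp_in n c" "degle 0 c"
  shows "vars c = {}"
proof -
  have "\<And>S. c S \<noteq> 0 \<Longrightarrow> S = {}"
  proof -
    fix S assume "c S \<noteq> 0"
    then have "S \<subseteq> {..<n}" "card S = 0" using assms unfolding supp_in_def degle_def by auto
    then have "finite S" using finite_subset by blast
    then show "S = {}" using \<open>card S = 0\<close> by simp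
  qed
  then show ?thesis unfolding vars_def by auto
qed

lemma Dv_nonzero:
  assumes "v \<in> vars c"
  shows "\<exists>S. Dv v c S \<noteq> 0"
proof -
  obtain S where S: "c S \<noteq> 0" "v \<in> S" using assms unfolding vars_def by auto
  then have "insert v (S - {v}) = S" by auto
  then have "Dv v c (S - {v}) \<noteq> 0" using S unfolding Dv_def by auto
  then show ?thesis by blast
qed

context cube
begin

lemma SZ_aux:
  assumes "finite W"
  shows "\<forall>c e S0. supp_in n c \<longrightarrow> vars c \<subseteq> W \<longrightarrow> degle e c \<longrightarrow> c S0 \<noteq> 0 \<longrightarrow>
           2^n \<le> 2^e * card {T\<in>Pow {..<n}. E c T \<noteq> 0}"
  using assms
proof (induction W rule: finite_induct)
  case empty
  show ?case
  proof (intro allI impI)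
    fix c :: "nat set \<Rightarrow> real" and e :: nat and S0
    assume "supp_in n c" "vars c \<subseteq> {}" "degle e c" and c0: "c S0 \<noteq> 0"
    then have v: "vars c = {}" by auto
    then have "S0 = {}" using c0 unfolding vars_def by auto
    then have "\<And>T. E c T \<noteq> 0" using E_novars[OF v] c0 by simp
    then have "{T\<in>Pow {..<n}. E c T \<noteq> 0} = Pow {..<n}" by auto
    then show "2^n \<le> 2^e * card {T\<in>Pow {..<n}. E c T \<noteq> 0}" by (simp add: card_Pow)
  qed
next
  case (insert v W)
  show ?case
  proof (intro allI impI)
    fix c :: "nat set \<Rightarrow> real" and e :: nat and S0
    assume sc: "supp_in n c" and vc: "vars c \<subseteq> insert v W" and de: "degle e c" and c0: "c S0 \<noteq> 0"
    let ?N = "{..<n}"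
    let ?Zc = "{T\<in>Pow ?N. E c T \<noteq> 0}"
    show "2^n \<le> 2^e * card ?Zc"
    proof (cases "v \<in> vars c")
      case False
      then have "vars c \<subseteq> W" using vc by auto
      then show ?thesis using insert.IH sc de c0 by blast
    next
      case True
      then have vn: "v < n" using vars_sub[OF sc] by auto
      obtain S1 where S1: "c S1 \<noteq> 0" "v \<in> S1" using True unfolding vars_def by auto
      then have "S1 \<subseteq> ?N" "card S1 \<le> e" using sc de unfolding supp_in_def degle_def by auto
      then have "card S1 > 0" using S1 finite_subset by (auto simp: card_gt_0_iff)
      then obtain e' where e: "e = Suc e'" using \<open>card S1 \<le> e\<close> by (cases e) auto
      obtain S2 where S2: "Dv v c S2 \<noteq> 0" using Dv_nonzero[OF True] by blast
      have dD: "degle e' (Dv v c)" using degle_Dv[OF sc] de e by simp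
      have vD: "vars (Dv v c) \<subseteq> W" using vars_Dv_sub[of v c] vc by auto
      have nD: "v \<notin> vars (Dv v c)" using vars_Dv_sub[of v c] by auto
      let ?Z1 = "{T\<in>Pow ?N. E (Dv v c) T \<noteq> 0}"
      let ?Z1' = "{T\<in>?Z1. v \<notin> T}"
      have IH: "2^n \<le> 2^e' * card ?Z1"
        using insert.IH supp_in_Dv[OF sc] vD dD S2 by blast
      have "?Z1 \<subseteq> ?Z1' \<union> insert v ` ?Z1'"
      proof
        fix T assume T: "T \<in> ?Z1"
        show "T \<in> ?Z1' \<union> insert v ` ?Z1'"
        proof (cases "v \<in> T")
          case True
          have "E (Dv v c) (T - {v}) = E (Dv v c) T" using E_toggle(2)[OF nD] .
          then have "T - {v} \<in> ?Z1'" using T by auto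
          moreover have "T = insert v (T - {v})" using True by auto
          ultimately show ?thesis by blast
        qed (use T in auto)
      qed
      then have "card ?Z1 \<le> card (?Z1' \<union> insert v ` ?Z1')" by (intro card_mono) auto
      also have "\<dots> \<le> card ?Z1' + card (insert v ` ?Z1')" by (rule card_Un_le)
      also have "\<dots> \<le> card ?Z1' + card ?Z1'" using card_image_le[of ?Z1' "insert v"] by simp
      finally have c1: "card ?Z1 \<le> 2 * card ?Z1'" by simp
      define f where "f T = (if E c T \<noteq> 0 then T else insert v T)" for T
      have "card ?Z1' \<le> card ?Zc"
      proof (rule card_inj_on_le[of f])
        show "inj_on f ?Z1'"
        proof (rule inj_onI)
          fix x y assume x: "x \<in> ?Z1'" and y: "y \<in> ?Z1'" and eq: "f x = f y"
          have vx: "v \<notin> x" using x by simp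
          have vy: "v \<notin> y" using y by simp
          have fx: "f x - {v} = x" using vx unfolding f_def by simp
          have fy: "f y - {v} = y" using vy unfolding f_def by simp
          show "x = y" using fx fy eq by metis
        qed
        show "f ` ?Z1' \<subseteq> ?Zc"
        proof
          fix y assume "y \<in> f ` ?Z1'"
          then obtain T where T: "T \<in> ?Z1'" "y = f T" by auto
          show "y \<in> ?Zc"
          proof (cases "E c T \<noteq> 0")
            case True
            then show ?thesis using T unfolding f_def by auto
          next
            case False
            have "E c (insert v T) - E c (T - {v}) = (b - a) * E (Dv v c) T"
              by (rule E_diff[OF sc vn])
            moreover have "T - {v} = T" using T by auto
            ultimately have "E c (insert v T) \<noteq> 0" using False T ab by auto
            moreover have "insert v T \<subseteq> ?N" using T vn by auto
            ultimately show ?thesis using T False unfolding f_def by auto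
          qed
        qed
      qed simp
      have "(2::nat)^n \<le> 2^e' * card ?Z1" by (rule IH)
      also have "\<dots> \<le> 2^e' * (2 * card ?Z1')" using c1 by (rule mult_le_mono2)
      also have "\<dots> \<le> 2^e' * (2 * card ?Zc)" using \<open>card ?Z1' \<le> card ?Zc\<close> by simp
      also have "\<dots> = 2^e * card ?Zc" using e by simp
      finally show ?thesis .
    qed
  qed
qed

lemma SZ:
  assumes "supp_in n c" "degle e c" "c S0 \<noteq> 0"
  shows "2^n \<le> 2^e * card {T\<in>Pow {..<n}. E c T \<noteq> 0}"
  using SZ_aux[of "{..<n}"] assms vars_sub[OF assms(1)] by blast

lemma rng_Dv:
  assumes "supp_in n c" "v < n"
  shows "card (rng (Dv v c)) \<le> card (rng c) ^ 2"
proof -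
  have "rng (Dv v c) \<subseteq> (\<lambda>(u, w). (u - w) / (b - a)) ` (rng c \<times> rng c)"
  proof
    fix y assume "y \<in> rng (Dv v c)"
    then obtain T where T: "T \<subseteq> {..<n}" "y = E (Dv v c) T" unfolding rng_def by auto
    have "y = (E c (insert v T) - E c (T - {v})) / (b - a)"
      using E_diff[OF assms, of T] T ab by (simp add: field_simps)
    moreover have "E c (insert v T) \<in> rng c" "E c (T - {v}) \<in> rng c"
      using T assms(2) unfolding rng_def by auto
    ultimately show "y \<in> (\<lambda>(u, w). (u - w) / (b - a)) ` (rng c \<times> rng c)" by force
  qed
  then have "card (rng (Dv v c)) \<le> card ((\<lambda>(u, w). (u - w) / (b - a)) ` (rng c \<times> rng c))"
    by (intro card_mono) (auto simp: finite_rng)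
  also have "\<dots> \<le> card (rng c \<times> rng c)" by (rule card_image_le) (simp add: finite_rng)
  also have "\<dots> = card (rng c) ^ 2" by (simp add: card_cartesian_product power2_eq_square)
  finally show ?thesis .
qed

end


fun NB :: "nat \<Rightarrow> nat \<Rightarrow> nat" where
  "NB 0 R = 0"
| "NB (Suc d) R = (NB d (R^2) + 1) * (R - 1) * 2^d"

context cube
begin

theorem junta:
  assumes "supp_in n c" "degle d c" "card (rng c) \<le> R"
  shows "card (vars c) \<le> NB d R"
  using assms
proof (induction d arbitrary: c R)
  case 0
  then show ?case using degle0 by simp
next
  case (Suc d)
  note sc = Suc.prems(1)
  let ?N = "{..<n}"
  let ?V = "vars c"
  define D where "D = NB d (R^2)"
  define g where "g i = Dv i c" for i
  have Vsub: "?V \<subseteq> ?N" using vars_sub[OF sc] .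
  have finV: "finite ?V" using Vsub finite_subset by blast
  have gD: "card (vars (g i)) \<le> D" if i: "i \<in> ?V" for i
  proof -
    have "card (rng (g i)) \<le> card (rng c) ^ 2" unfolding g_def using rng_Dv[OF sc] i Vsub by auto
    also have "\<dots> \<le> R^2" using Suc.prems(3) by (simp add: power_mono)
    finally have "card (rng (g i)) \<le> R^2" .
    then show ?thesis unfolding D_def g_def
      using Suc.IH[OF supp_in_Dv[OF sc] degle_Dv[OF sc Suc.prems(2)]] by blast
  qed
  have gfin: "finite (vars (g i))" for i
    using vars_sub[OF supp_in_Dv[OF sc]] finite_subset unfolding g_def by blast
  have girr: "i \<notin> vars (g i)" for i unfolding g_def vars_Dv by simp
  have gsym: "i \<in> vars (g j)" if "j \<in> vars (g i)" for i j
    using that unfolding g_def vars_Dv by blast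
  obtain I where I: "I \<subseteq> ?V" "card ?V \<le> (D + 1) * card I" "\<forall>i\<in>I. \<forall>j\<in>I. j \<notin> vars (g i)"
    using greedy[of ?V "\<lambda>i. vars (g i)" D] finV gfin gD girr gsym by blast
  have finI: "finite I" using I(1) finV finite_subset by blast
  have szi: "card (Pow ?N) \<le> 2^d * card {T\<in>Pow ?N. E (g i) T \<noteq> 0}" if i: "i \<in> I" for i
  proof -
    obtain S where "g i S \<noteq> 0" using Dv_nonzero[of i c] i I(1) unfolding g_def by blast
    then show ?thesis
      using SZ[OF supp_in_Dv[OF sc] degle_Dv[OF sc Suc.prems(2)]] unfolding g_def
      by (simp add: card_Pow)
  qed
  obtain T0 where T0: "T0 \<in> Pow ?N" "card I \<le> 2^d * card {i\<in>I. E (g i) T0 \<noteq> 0}"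
    using averaging[of I "Pow ?N" "2^d" "\<lambda>i T. E (g i) T \<noteq> 0"] finI szi by auto
  define P where "P = {i\<in>I. E (g i) T0 \<noteq> 0}"
  define \<sigma> where "\<sigma> i = (b - a) * E (g i) T0" for i
  define Pm where "Pm = {i\<in>P. \<sigma> i < 0}"
  define T1 where "T1 = (T0 - I) \<union> Pm"
  define F where "F U = (T1 - U) \<union> (U - Pm)" for U
  define w where "w i = \<bar>\<sigma> i\<bar>" for i
  have PI: "P \<subseteq> I" unfolding P_def by auto
  have PmP: "Pm \<subseteq> P" unfolding Pm_def by auto
  have finP: "finite P" using PI finI finite_subset by blast
  have sig0: "\<sigma> i \<noteq> 0" if "i \<in> P" for i using that ab unfolding P_def \<sigma>_def by auto
  have wpos: "\<forall>i\<in>P. 0 < w i" using sig0 unfolding w_def by auto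
  have IN: "I \<subseteq> ?N" using I(1) Vsub by auto
  have FN: "F U \<subseteq> ?N" if "U \<subseteq> P" for U
    using that T0(1) PI PmP IN unfolding F_def T1_def by auto
  have Fval: "E c (F U) = E c T1 + sum w U" if "U \<subseteq> P" for U
  proof -
    have "finite U" using that finP finite_subset by blast
    then show ?thesis using that
    proof (induction U rule: finite_induct)
      case empty
      then show ?case unfolding F_def by simp
    next
      case (insert j U)
      let ?G = "F U"
      have jP: "j \<in> P" and UP: "U \<subseteq> P" using insert.prems by auto
      have jI: "j \<in> I" using jP PI by auto
      have jn: "j < n" using jI IN by auto
      have IH: "E c ?G = E c T1 + sum w U" using insert.IH UP by blast
      have gval: "E (g j) ?G = E (g j) T0"
        unfolding E_def
      proof (rule eval_dep)
        fix k assume k: "k \<in> vars (g j)"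
        then have "k \<notin> I" using I(3) jI by blast
        then have "(k \<in> ?G) = (k \<in> T0)" using UP PI PmP unfolding F_def T1_def by auto
        then show "pt ?G k = pt T0 k" unfolding pt_def by simp
      qed
      have dif: "E c (insert j ?G) - E c (?G - {j}) = \<sigma> j"
        using E_diff[OF sc jn, of ?G] gval unfolding \<sigma>_def g_def by simp
      show ?case
      proof (cases "j \<in> Pm")
        case True
        have F1: "F (insert j U) = ?G - {j}" unfolding F_def using True by auto
        have jG: "j \<in> ?G" unfolding F_def T1_def using True insert.hyps(2) by auto
        then have "insert j ?G = ?G" by auto
        moreover have "\<sigma> j < 0" using True unfolding Pm_def by auto
        ultimately have "E c (?G - {j}) = E c ?G + w j" using dif unfolding w_def by auto
        then show ?thesis using F1 IH insert.hyps by simp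
      next
        case False
        have jT1: "j \<notin> T1" unfolding T1_def using False jI by auto
        have F1: "F (insert j U) = insert j ?G" unfolding F_def using False by auto
        have jG: "j \<notin> ?G" unfolding F_def using jT1 insert.hyps(2) by auto
        then have "?G - {j} = ?G" by auto
        moreover have "\<sigma> j > 0" using False sig0[OF jP] unfolding Pm_def using jP by auto
        ultimately have "E c (insert j ?G) = E c ?G + w j" using dif unfolding w_def by auto
        then show ?thesis using F1 IH insert.hyps by simp
      qed
    qed
  qed
  have "(\<lambda>x. E c T1 + x) ` ((\<lambda>U. sum w U) ` Pow P) \<subseteq> rng c"
  proof
    fix y assume "y \<in> (\<lambda>x. E c T1 + x) ` ((\<lambda>U. sum w U) ` Pow P)"
    then obtain U where U: "U \<subseteq> P" "y = E c T1 + sum w U" by auto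
    then have "y = E c (F U)" using Fval by simp
    then show "y \<in> rng c" unfolding rng_def using FN[OF U(1)] by auto
  qed
  then have "card ((\<lambda>x. E c T1 + x) ` ((\<lambda>U. sum w U) ` Pow P)) \<le> card (rng c)"
    by (intro card_mono) (auto simp: finite_rng)
  moreover have "card ((\<lambda>x. E c T1 + x) ` ((\<lambda>U. sum w U) ` Pow P)) = card ((\<lambda>U. sum w U) ` Pow P)"
    by (rule card_image) (auto simp: inj_on_def)
  ultimately have "card P + 1 \<le> R"
    using chain_card[OF finP wpos] Suc.prems(3) by linarith
  then have cP: "card P \<le> R - 1" by simp
  have "card ?V \<le> (D + 1) * card I" by (rule I(2))
  also have "\<dots> \<le> (D + 1) * (2^d * card P)" using T0(2) unfolding P_def by (rule mult_le_mono2)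
  also have "\<dots> \<le> (D + 1) * (2^d * (R - 1))" using cP by (intro mult_le_mono2) simp
  also have "\<dots> = NB (Suc d) R" unfolding D_def by (simp only: NB.simps mult_ac)
  finally show ?case .
qed

end


lemma NB_bound:
  assumes "R \<ge> 1"
  shows "NB d R + 1 \<le> R^(2^d - 1) * 2^(d*d)"
  using assms
proof (induction d arbitrary: R)
  case 0
  then show ?case by simp
next
  case (Suc d)
  define X where "X = NB d (R^2) + 1"
  have X1: "X \<ge> 1" unfolding X_def by simp
  have IH: "X \<le> (R^2)^(2^d - 1) * 2^(d*d)"
    unfolding X_def using Suc.IH[of "R^2"] Suc.prems by simp
  have "NB (Suc d) R + 1 = X * (R - 1) * 2^d + 1" unfolding X_def by simp
  also have "\<dots> \<le> X * (R - 1) * 2^d + X * 2^d" using X1 by simp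
  also have "\<dots> = X * R * 2^d" using Suc.prems by (cases R) (auto simp: algebra_simps)
  also have "\<dots> \<le> (R^2)^(2^d - 1) * 2^(d*d) * R * 2^d" using IH by simp
  also have "(R^2)^(2^d - 1) = R^(2 * (2^d - 1))" by (simp only: power_mult)
  also have "R^(2 * (2^d - 1)) * 2^(d*d) * R * 2^d = R^(2 * (2^d - 1) + 1) * (2::nat)^(d*d + d)"
    by (simp only: power_add power_one_right mult_ac)
  also have "2 * (2^d - 1) + 1 = (2::nat)^(Suc d) - 1"
    using one_le_power[of "2::nat" d] by (cases "(2::nat)^d") auto
  also have "(2::nat)^(d*d + d) \<le> 2^(Suc d * Suc d)" by (intro power_increasing) auto
  finally show ?case by simp
qed

lemma key_pow:
  assumes "d \<ge> 1" "2^d \<le> L"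
  shows "L^(2^d) \<le> (2::nat)^((d+1)*L)"
  using assms(2)
proof (induction L rule: dec_induct)
  case base
  have "((2::nat)^d)^(2^d) = 2^(d * 2^d)" by (simp add: power_mult)
  also have "\<dots> \<le> 2^((d+1) * 2^d)" by (intro power_increasing) auto
  finally show ?case .
next
  case (step L)
  define m :: nat where "m = 2^d"
  have Lpos: "L > 0" using step.hyps(1) by (metis le_zero_eq neq0_conv power_eq_0_iff zero_neq_numeral)
  have "(1 + 1 / real L)^m \<le> exp (1 / real L) ^ m"
    by (intro power_mono) (auto simp del: exp_ge_add_one_self intro: exp_ge_add_one_self[of "1 / real L", simplified add.commute])
  also have "\<dots> = exp (real m * (1 / real L))" by (rule exp_of_nat_mult[symmetric])
  also have "\<dots> \<le> exp 1"
    using step.hyps(1) Lpos unfolding m_def by (simp add: field_simps)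
  also have "\<dots> \<le> 3" by (rule exp_le)
  finally have h1: "(1 + 1 / real L)^m \<le> 3" .
  have "real ((L + 1)^m) = real L ^ m * (1 + 1 / real L)^m"
    using Lpos by (simp add: power_mult_distrib[symmetric] field_simps)
  also have "\<dots> \<le> real L ^ m * 3" using h1 by (intro mult_left_mono) auto
  finally have "real ((L + 1)^m) \<le> real (L^m * 3)" by simp
  then have "(L + 1)^m \<le> L^m * 3" by (simp only: of_nat_le_iff)
  also have "\<dots> \<le> L^m * 2^(d+1)"
  proof -
    have "(2::nat)^(d+1) \<ge> 2^2" using assms(1) by (intro power_increasing) auto
    then show ?thesis by (intro mult_left_mono) auto
  qed
  also have "\<dots> \<le> 2^((d+1)*L) * 2^(d+1)" using step.IH unfolding m_def by simp
  also have "\<dots> = 2^((d+1)*Suc L)" by (simp add: power_add[symmetric] algebra_simps)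
  finally show ?case unfolding m_def by simp
qed

lemma final_arith:
  assumes "d \<ge> 1" "2^d \<le> L" "J \<le> NB d L"
  shows "(J + 1)^d \<le> 2 ^ (2 * d^2 * (L + 3))"
proof -
  have L1: "L \<ge> 1" using assms(2) by (metis one_le_numeral one_le_power order_trans)
  have dL: "d \<le> L" using assms(2) less_exp[of d] by linarith
  have "J + 1 \<le> L^(2^d - 1) * 2^(d*d)" using NB_bound[OF L1, of d] assms(3) by simp
  also have "\<dots> \<le> L^(2^d) * 2^(d*d)" using L1 by (intro mult_right_mono power_increasing) auto
  also have "\<dots> \<le> 2^((d+1)*L) * 2^(d*d)" using key_pow[OF assms(1,2)] by simp
  also have "\<dots> = 2^((d+1)*L + d*d)" by (simp add: power_add)
  also have "\<dots> \<le> 2^(2*d*(L+3))"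
  proof (intro power_increasing)
    have "(d - 1) * d \<le> (d - 1) * L" using dL by simp
    then have "d * d \<le> (d - 1) * L + d" using assms(1) by (cases d) (auto simp: algebra_simps)
    then show "(d+1)*L + d*d \<le> 2*d*(L+3)" using assms(1) by (cases d) (auto simp: algebra_simps)
  qed auto
  finally have "J + 1 \<le> 2^(2*d*(L+3))" .
  then have "(J + 1)^d \<le> (2^(2*d*(L+3)))^d" by (rule power_mono) simp
  also have "\<dots> = 2 ^ (2 * d^2 * (L + 3))" by (simp add: power_mult[symmetric] power2_eq_square algebra_simps)
  finally show ?thesis .
qed



lemma sparsity_bound:
  assumes "supp_in n q" "degle d q"
  shows "sparsity q \<le> (card (vars q) + 1)^d"
proof -
  let ?V = "vars q"
  let ?J = "card ?V"
  have finV: "finite ?V" using vars_sub[OF assms(1)] finite_subset by blast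
  have sub: "{S. q S \<noteq> 0} \<subseteq> (\<Union>k\<in>{..d}. {B. B \<subseteq> ?V \<and> card B = k})"
  proof
    fix S assume "S \<in> {S. q S \<noteq> 0}"
    then have "q S \<noteq> 0" by simp
    then have "S \<subseteq> ?V" "card S \<le> d" using assms(2) unfolding vars_def degle_def by auto
    then show "S \<in> (\<Union>k\<in>{..d}. {B. B \<subseteq> ?V \<and> card B = k})" by auto
  qed
  have finU: "finite (\<Union>k\<in>{..d}. {B. B \<subseteq> ?V \<and> card B = k})"
    using finV by (intro finite_UN_I) auto
  have "sparsity q \<le> card (\<Union>k\<in>{..d}. {B. B \<subseteq> ?V \<and> card B = k})"
    unfolding sparsity_def using sub finU by (rule card_mono[rotated])
  also have "\<dots> \<le> (\<Sum>k\<in>{..d}. card {B. B \<subseteq> ?V \<and> card B = k})" by (rule card_UN_le) simp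
  also have "\<dots> = (\<Sum>k\<in>{..d}. ?J choose k)" using n_subsets[OF finV] by simp
  also have "\<dots> \<le> (\<Sum>k\<in>{..d}. (d choose k) * ?J^k * 1^(d-k))"
  proof (intro sum_mono)
    fix k assume k: "k \<in> {..d}"
    have "?J choose k \<le> ?J^k" by (cases "k \<le> ?J") (auto intro: binomial_le_pow simp: binomial_eq_0)
    also have "\<dots> \<le> (d choose k) * ?J^k"
    proof -
      have c1: "1 \<le> d choose k" using k by (simp add: Suc_le_eq)
      have "1 * ?J^k \<le> (d choose k) * ?J^k" using c1 by (rule mult_le_mono1)
      then show ?thesis by simp
    qed
    finally show "?J choose k \<le> (d choose k) * ?J^k * 1^(d-k)" by simp
  qed
  also have "\<dots> = (?J + 1)^d" using binomial_ring[of ?J 1 d] by simp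
  finally show ?thesis .
qed

lemma set_poly_distr:
  "set_pmf (poly_distr X n c) = mlpoly_eval n c ` PiE_dflt {..<n} 0 (\<lambda>_. set_pmf X)"
  unfolding poly_distr_def by (simp add: set_Pi_pmf comp_def)

lemma is_ml_supp: "is_mlpoly n d c \<Longrightarrow> supp_in n c"
  unfolding is_mlpoly_def supp_in_def by auto
lemma is_ml_deg: "is_mlpoly n d c \<Longrightarrow> degle d c"
  unfolding is_mlpoly_def degle_def by auto

lemma card_img_p:
  assumes "is_mlpoly n d p" "finite A" "card A \<le> l" "l \<ge> 1"
  shows "card (mlpoly_eval n p ` PiE_dflt {..<n} 0 (\<lambda>_. A)) \<le> l^(d * sparsity p)"
proof -
  let ?W = "vars p"
  have Wsub: "?W \<subseteq> {..<n}" using vars_sub[OF is_ml_supp[OF assms(1)]] .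
  have finW: "finite ?W" using Wsub finite_subset by blast
  define r where "r x = (\<lambda>i. if i \<in> ?W then x i else 0)" for x :: "nat \<Rightarrow> real"
  have "mlpoly_eval n p ` PiE_dflt {..<n} 0 (\<lambda>_. A) \<subseteq> mlpoly_eval n p ` PiE_dflt ?W 0 (\<lambda>_. A)"
  proof
    fix y assume "y \<in> mlpoly_eval n p ` PiE_dflt {..<n} 0 (\<lambda>_. A)"
    then obtain x where x: "x \<in> PiE_dflt {..<n} 0 (\<lambda>_. A)" "y = mlpoly_eval n p x" by auto
    have "r x \<in> PiE_dflt ?W 0 (\<lambda>_. A)" using x(1) Wsub unfolding PiE_dflt_def r_def by auto
    moreover have "mlpoly_eval n p x = mlpoly_eval n p (r x)" by (rule eval_dep) (simp add: r_def)
    ultimately show "y \<in> mlpoly_eval n p ` PiE_dflt ?W 0 (\<lambda>_. A)" using x(2) by auto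
  qed
  then have "card (mlpoly_eval n p ` PiE_dflt {..<n} 0 (\<lambda>_. A)) \<le> card (mlpoly_eval n p ` PiE_dflt ?W 0 (\<lambda>_. A))"
    using finW assms(2) by (intro card_mono) auto
  also have "\<dots> \<le> card (PiE_dflt ?W 0 (\<lambda>_. A))" by (rule card_image_le) (use finW assms(2) in auto)
  also have "\<dots> = card A ^ card ?W" using finW assms(2) by (simp add: card_PiE_dflt)
  also have "\<dots> \<le> l ^ card ?W" using assms(3) by (rule power_mono) simp
  also have "\<dots> \<le> l ^ (d * sparsity p)"
  proof (rule power_increasing[OF _ assms(4)])
    have "?W = \<Union>{S. p S \<noteq> 0}" unfolding vars_def by auto
    then have "card ?W \<le> sum card {S. p S \<noteq> 0}" using card_Union_le_sum_card by metis
    also have "\<dots> \<le> of_nat (card {S. p S \<noteq> 0}) * d"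
      using is_ml_deg[OF assms(1)] unfolding degle_def by (intro sum_bounded_above) auto
    finally show "card ?W \<le> d * sparsity p" unfolding sparsity_def by (simp add: mult.commute)
  qed
  finally show ?thesis .
qed

lemma two_points:
  fixes X :: "real pmf"
  assumes "measure_pmf.variance X (\<lambda>x. x) = 1"
  shows "\<exists>a b. a \<in> set_pmf X \<and> b \<in> set_pmf X \<and> a \<noteq> b"
proof (rule ccontr)
  assume "\<not> ?thesis"
  then have all: "\<forall>a\<in>set_pmf X. \<forall>b\<in>set_pmf X. a = b" by blast
  obtain a where a: "a \<in> set_pmf X" using set_pmf_not_empty[of X] by blast
  then have "set_pmf X \<subseteq> {a}" using all by blast
  then have X: "X = return_pmf a" by (simp add: set_pmf_subset_singleton)
  have "measure_pmf.variance (return_pmf a) (\<lambda>x. x) = 0" by (simp add: expectation_return_pmf)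
  then have "measure_pmf.variance X (\<lambda>x. x) = 0" by (simp only: X)
  then show False using assms by simp
qed

lemma main_bound:
  assumes fin: "finite (set_pmf X)"
    and var: "measure_pmf.variance X (\<lambda>x. x) = 1"
    and cl: "card (set_pmf X) \<le> l"
    and d1: "d \<ge> 1" and s1: "s \<ge> 1"
    and pp: "is_mlpoly n d p" and qq: "is_mlpoly n d q"
    and sp: "sparsity p = s"
    and eq: "poly_distr X n p = poly_distr X n q"
  shows "sparsity q \<le> Phi d s l"
proof -
  let ?A = "set_pmf X"
  let ?G = "PiE_dflt {..<n} 0 (\<lambda>_. ?A)"
  obtain a b where abX: "a \<in> ?A" "b \<in> ?A" "a \<noteq> b" using two_points[OF var] by blast
  interpret cube a b n by unfold_locales (rule abX(3))
  have "card {a, b} \<le> card ?A" using abX fin by (intro card_mono) auto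
  then have l2: "l \<ge> 2" using abX(3) cl by simp
  define L where "L = l^(d * s)"
  have "(2::nat)^d \<le> 2^(d * s)" using s1 by (intro power_increasing) auto
  also have "\<dots> \<le> l^(d * s)" using l2 by (intro power_mono) auto
  finally have L2: "2^d \<le> L" unfolding L_def .
  have "rng q \<subseteq> mlpoly_eval n q ` ?G"
  proof
    fix y assume "y \<in> rng q"
    then obtain T where T: "T \<subseteq> {..<n}" "y = E q T" unfolding rng_def by auto
    have "pt T \<in> ?G" using T(1) abX unfolding PiE_dflt_def pt_def by auto
    then show "y \<in> mlpoly_eval n q ` ?G" using T(2) unfolding E_def by auto
  qed
  also have "mlpoly_eval n q ` ?G = mlpoly_eval n p ` ?G"
    using set_poly_distr[of X n q] set_poly_distr[of X n p] eq by simp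
  finally have rs: "rng q \<subseteq> mlpoly_eval n p ` ?G" .
  have "card (rng q) \<le> card (mlpoly_eval n p ` ?G)"
    using rs fin by (intro card_mono) auto
  also have "\<dots> \<le> L" unfolding L_def using card_img_p[OF pp fin cl] l2 sp by simp
  finally have cr: "card (rng q) \<le> L" .
  have J: "card (vars q) \<le> NB d L"
    by (rule junta[OF is_ml_supp[OF qq] is_ml_deg[OF qq] cr])
  have "sparsity q \<le> (card (vars q) + 1)^d"
    by (rule sparsity_bound[OF is_ml_supp[OF qq] is_ml_deg[OF qq]])
  also have "\<dots> \<le> 2 ^ (2 * d^2 * (L + 3))" by (rule final_arith[OF d1 L2 J])
  also have "\<dots> = Phi d s l" unfolding Phi_def L_def ..
  finally show ?thesis .
qed

theorem theorem1p5:
  fixes X :: "real pmf" and l d s :: nat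
  assumes "finite (set_pmf X)"
    and "measure_pmf.expectation X (\<lambda>x. x) = 0"
    and "measure_pmf.variance X (\<lambda>x. x) = 1"
    and "card (set_pmf X) \<le> l"
    and "d \<ge> 1" and "s \<ge> 1"
  shows "\<not> (\<exists>n p q. is_mlpoly n d p \<and> is_mlpoly n d q \<and> sparsity p = s \<and>
              sparsity q > Phi d s l \<and> poly_distr X n p = poly_distr X n q)
         \<and> {t. gap_pair X d s t} \<noteq> {} \<and> finite {t. gap_pair X d s t}
         \<and> Max_Sparsity_Gap X d s \<le> Phi d s l"
proof -
  have bnd: "t \<le> Phi d s l" if "gap_pair X d s t" for t
    using that main_bound[OF assms(1,3,4,5,6)] unfolding gap_pair_def by blast
  have part1: "\<not> (\<exists>n p q. is_mlpoly n d p \<and> is_mlpoly n d q \<and> sparsity p = s \<and>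
              sparsity q > Phi d s l \<and> poly_distr X n p = poly_distr X n q)"
  proof
    assume "\<exists>n p q. is_mlpoly n d p \<and> is_mlpoly n d q \<and> sparsity p = s \<and>
              sparsity q > Phi d s l \<and> poly_distr X n p = poly_distr X n q"
    then obtain n p q where h: "is_mlpoly n d p" "is_mlpoly n d q" "sparsity p = s"
      "sparsity q > Phi d s l" "poly_distr X n p = poly_distr X n q" by blast
    have "sparsity q \<le> Phi d s l" by (rule main_bound[OF assms(1,3,4,5,6) h(1,2,3,5)])
    then show False using h(4) by simp
  qed
  define p0 where "p0 S = (if S \<in> (\<lambda>i. {i}) ` {..<s} then 1 else (0::real))" for S
  have ip0: "is_mlpoly s d p0" unfolding is_mlpoly_def p0_def using assms(5) by auto
  have "{S. p0 S \<noteq> 0} = (\<lambda>i. {i}) ` {..<s}" unfolding p0_def by auto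
  then have "sparsity p0 = s" unfolding sparsity_def by (simp add: card_image inj_on_def)
  then have gs: "gap_pair X d s s" unfolding gap_pair_def using ip0 by blast
  have ne: "{t. gap_pair X d s t} \<noteq> {}" using gs by blast
  have fn: "finite {t. gap_pair X d s t}"
    by (rule finite_subset[of _ "{..Phi d s l}"]) (auto dest: bnd)
  have "Max_Sparsity_Gap X d s \<le> Phi d s l"
    unfolding Max_Sparsity_Gap_def using fn ne bnd by (simp add: Max_le_iff)
  then show ?thesis using part1 ne fn by blast
qed


end
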